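(* Let $k\ge 2$ and $\Delta\ge 2$ be integers and $f(z)=\frac{(1-z^{k-1})^{\Delta-1}}{1+(1-z^{k-1})^{\Delta-1}}$ for $z\in[0,1]$. Then $f$ is strictly decreasing on $[0,1]$, and there is a unique $x\in[0,1]$ with $f(x)=x$; this $x$ satisfies $|f'(x)|=\frac{(\Delta-1)(k-1)x^{k-1}(1-x)}{1-x^{k-1}}$. Finally, if $|f'(x)|<1$, then the equation $f(f(z))=z$ for $z\in[0,1]$ is satisfied only by $z=x$. *)

theory Defs
  imports "HOL-Analysis.Analysis"
begin

definition lem56_f :: "nat \<Rightarrow> nat \<Rightarrow> real \<Rightarrow> real" where
  "lem56_f k \<Delta> z = (1 - z ^ (k - 1)) ^ (\<Delta> - 1) / (1 + (1 - z ^ (k - 1)) ^ (\<Delta> - 1))"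

end

theory Submission
  imports Defs
begin

definition FF :: "nat \<Rightarrow> nat \<Rightarrow> real \<Rightarrow> real" where
  "FF a d t = (1 - t^a)^d / (1 + (1 - t^a)^d)"

lemma FF_lem: "lem56_f k D = FF (k-1) (D-1)"
  by (rule ext) (simp add: lem56_f_def FF_def)

lemma FF_strict:
  assumes "a \<ge> 1" "d \<ge> 1" "0 \<le> s" "s < t" "t \<le> 1"
  shows "FF a d t < FF a d s"
proof -
  have "t^a \<le> 1" using assms by (simp add: power_le_one)
  have "s^a < t^a" using assms by (simp add: power_strict_mono)
  hence "(1 - t^a)^d < (1 - s^a)^d"
    using assms \<open>t^a \<le> 1\<close> by (intro power_strict_mono) auto
  moreover have "0 \<le> (1 - t^a)^d" using \<open>t^a \<le> 1\<close> by simp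
  ultimately show ?thesis unfolding FF_def
    by (simp add: divide_simps algebra_simps)
qed

lemma FF_cont: "continuous_on {0..1} (FF a d)"
proof -
  have "\<forall>t\<in>{0..1::real}. 1 + (1 - t^a)^d \<noteq> 0"
  proof
    fix t :: real assume "t \<in> {0..1}"
    hence "0 \<le> (1 - t^a)^d" by (simp add: power_le_one)
    thus "1 + (1 - t^a)^d \<noteq> 0" by linarith
  qed
  then show ?thesis unfolding FF_def by (intro continuous_intros) auto
qed

lemma FF_range:
  assumes "0 \<le> t" "t \<le> 1"
  shows "0 \<le> FF a d t" "FF a d t \<le> 1/2"
proof -
  have "t^a \<le> 1" using assms by (simp add: power_le_one)
  have y0: "0 \<le> (1-t^a)^d" using \<open>t^a \<le> 1\<close> by simp
  have y1: "(1-t^a)^d \<le> 1" using \<open>t^a \<le> 1\<close> assms by (simp add: power_le_one)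
  show "0 \<le> FF a d t" unfolding FF_def using y0 by simp
  show "FF a d t \<le> 1/2" unfolding FF_def using y0 y1 by (simp add: divide_simps)
qed


lemma FF_fix:
  assumes "a \<ge> 1" "0 \<le> x" "x \<le> 1" "FF a d x = x"
  shows "0 < x" "x < 1" "(1 - x^a)^d = x / (1 - x)"
proof -
  have "x^a \<le> 1" using assms by (simp add: power_le_one)
  have y0: "0 \<le> (1-x^a)^d" using \<open>x^a \<le> 1\<close> by simp
  have e: "(1-x^a)^d = x * (1 + (1-x^a)^d)"
    using assms(4) y0 unfolding FF_def by (simp add: divide_simps)
  show "0 < x"
  proof (rule ccontr)
    assume "\<not> 0 < x" hence "x = 0" using assms by simp
    thus False using e assms(1) by (simp add: power_0_left)
  qed
  show "x < 1"
  proof (rule ccontr)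
    assume "\<not> x < 1" hence "x = 1" using assms by simp
    thus False using e y0 by simp
  qed
  thus "(1 - x^a)^d = x / (1 - x)" using e by (simp add: field_simps)
qed

lemma FF_logodds:
  assumes "0 \<le> t" "t < 1" "FF a d t = s" "a \<ge> 1"
  shows "ln s - ln (1 - s) = real d * ln (1 - t^a)"
proof -
  have "t^a < 1" using assms by (simp add: power_less_one_iff)
  define Y where "Y = (1 - t^a)^d"
  have Y0: "Y > 0" unfolding Y_def using \<open>t^a < 1\<close> by simp
  have s: "s = Y / (1 + Y)" using assms(3) unfolding FF_def Y_def by simp
  have "1 - s = 1 / (1 + Y)" using Y0 s by (simp add: field_simps)
  hence "ln s - ln (1 - s) = ln Y" using s Y0 by (simp add: ln_div)
  also have "ln Y = real d * ln (1 - t^a)" unfolding Y_def using \<open>t^a < 1\<close> by (simp add: ln_realpow)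
  finally show ?thesis .
qed

lemma FF_deriv:
  assumes "0 < x" "x < 1" "a \<ge> 1"
  shows "(FF a d has_real_derivative
     (- (real d * (1 - x^a)^(d-1) * (real a * x^(a-1))) / (1 + (1-x^a)^d)^2)) (at x)"
proof -
  have "x^a < 1" using assms by (simp add: power_less_one_iff)
  hence p: "1 + (1-x^a)^d \<noteq> 0" by (smt (verit) zero_le_power)
  show ?thesis unfolding FF_def[abs_def]
    apply (rule derivative_eq_intros refl)+
    using p apply simp
    apply (simp add: power2_eq_square algebra_simps)
    done
qed


lemma exp_ineq:
  fixes \<alpha> :: real assumes "\<alpha> \<ge> 0"
  shows "exp (1 - exp (-\<alpha>)) \<le> 1 + \<alpha>"
proof -
  have "(\<lambda>t. ln (1+t) - 1 + exp (-t)) 0 \<le> (\<lambda>t. ln (1+t) - 1 + exp (-t)) \<alpha>"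
  proof (rule DERIV_nonneg_imp_nondecreasing[OF assms])
    fix t :: real assume t: "0 \<le> t" "t \<le> \<alpha>"
    have "((\<lambda>t. ln (1+t) - 1 + exp (-t)) has_real_derivative (1/(1+t) - exp (-t))) (at t)"
      using t by (auto intro!: derivative_eq_intros simp: divide_simps)
    moreover have "exp (-t) \<le> 1/(1+t)"
    proof -
      have "1 + t \<le> exp t" by (rule exp_ge_add_one_self)
      thus ?thesis using t by (simp add: exp_minus divide_simps)
    qed
    ultimately show "\<exists>y. ((\<lambda>t. ln (1+t) - 1 + exp (-t)) has_real_derivative y) (at t) \<and> y \<ge> 0"
      by auto
  qed
  hence "1 - exp (-\<alpha>) \<le> ln (1 + \<alpha>)" by simp
  hence "exp (1 - exp (-\<alpha>)) \<le> exp (ln (1+\<alpha>))" by simp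
  thus ?thesis using assms by simp
qed

lemma final_ineq:
  fixes c \<alpha> \<beta> :: real
  assumes "0 \<le> c" "c < 1" "\<alpha> > 0" "\<alpha> \<le> c * (exp \<beta> - 1)" "\<beta> \<le> c * (1 - exp (-\<alpha>))"
  shows False
proof -
  define y where "y = 1 - exp (-\<alpha>)"
  have y0: "y > 0" unfolding y_def using assms by simp
  have "\<beta> \<le> y" using assms(5) y0 assms(1,2) unfolding y_def[symmetric]
    by (smt (verit) mult_le_cancel_right1 mult_right_mono)
  hence "exp \<beta> \<le> 1 + \<alpha>" using exp_ineq[of \<alpha>] assms(3) unfolding y_def by (smt (verit) exp_le_cancel_iff)
  hence "\<alpha> \<le> c * \<alpha>" using assms(1,4) by (smt (verit) mult_left_mono)
  thus False using assms by (smt (verit) mult_less_cancel_right2)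
qed

lemma S_mono:
  fixes s t :: real assumes "0 \<le> s" "s \<le> t"
  shows "(\<Sum>i<a. s^i) \<le> (\<Sum>i<a. t^i)"
  by (rule sum_mono) (use assms in \<open>auto intro: power_mono\<close>)

lemma S_pos:
  fixes t :: real assumes "0 \<le> t" "a \<ge> 1"
  shows "(\<Sum>i<a. t^i) \<ge> 1"
proof -
  have "(\<Sum>i<a. t^i) = t^0 + (\<Sum>i\<in>{..<a}-{0}. t^i)"
    using assms by (subst sum.remove[of _ 0]) auto
  moreover have "(\<Sum>i\<in>{..<a}-{0}. t^i) \<ge> 0" using assms by (intro sum_nonneg) auto
  ultimately show ?thesis by simp
qed

lemma S_le:
  fixes t :: real assumes "0 \<le> t" "t \<le> 1"
  shows "(\<Sum>i<a. t^i) \<le> real a"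
proof -
  have "(\<Sum>i<a. t^i) \<le> (\<Sum>i<a. (1::real))" by (rule sum_mono) (use assms in \<open>auto intro: power_le_one\<close>)
  thus ?thesis by simp
qed

lemma ratio_eq:
  fixes t :: real assumes "0 \<le> t" "t < 1" "a \<ge> 1"
  shows "(1 - t) / (1 - t^a) = 1 / (\<Sum>i<a. t^i)"
  using one_diff_power_eq[of t a] S_pos[OF assms(1,3)] assms by (simp add: divide_simps)

lemma h_mono:
  fixes s t :: real assumes "0 \<le> s" "s \<le> t" "t < 1" "a \<ge> 1"
  shows "real a * (1-t)/(1-t^a) - t \<le> real a * (1-s)/(1-s^a) - s"
proof -
  have "(1-t)/(1-t^a) \<le> (1-s)/(1-s^a)"
    using ratio_eq[of t a] ratio_eq[of s a] assms S_mono[of s t a] S_pos[of s a]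
    by (simp add: frac_le)
  hence "real a * ((1-t)/(1-t^a)) \<le> real a * ((1-s)/(1-s^a))" by (rule mult_left_mono) auto
  moreover have "real a * (1-t)/(1-t^a) = real a * ((1-t)/(1-t^a))"
    "real a * (1-s)/(1-s^a) = real a * ((1-s)/(1-s^a))" by simp_all
  ultimately show ?thesis using assms by linarith
qed


lemma lam_deriv:
  fixes y \<kappa> :: real and a :: nat
  assumes "0 < y" "y < 1" "a \<ge> 1"
  shows "((\<lambda>t. real a * ln t + ln (1-t) - ln (1-t^a) - \<kappa> * (ln t - ln (1-t))) has_real_derivative
      ((real a * (1-y)/(1-y^a) - y - \<kappa>) / (y*(1-y)))) (at y)"
proof -
  have ya: "y^a < 1" using assms by (simp add: power_less_one_iff)
  have ya': "y^a = y * y^(a-1)" using assms by (cases a) auto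
  show ?thesis
    using assms ya apply (auto intro!: derivative_eq_intros)
  proof -
    define p where "p = y^(a-1)"
    have yp: "y^a = y*p" "y^(a - Suc 0) = p" using ya' by (simp_all add: p_def)
    have n: "1 - y*p \<noteq> 0" using ya yp by simp
    show "real a / y - 1 / (1 - y) + real a * y ^ (a - Suc 0) / (1 - y ^ a) -
        (1 / y + 1 / (1 - y)) * \<kappa> =
        (real a * (1 - y) / (1 - y ^ a) - y - \<kappa>) / (y * (1 - y))"
      unfolding yp using assms n
      apply (simp add: divide_simps)
      apply (simp add: algebra_simps)
      done
  qed
qed

lemma G_deriv:
  fixes y \<kappa> c P :: real and a d :: nat
  assumes "0 < y" "y < 1" "a \<ge> 1" "\<kappa> \<noteq> 0"
  shows "((\<lambda>t. real d * ln (1-t^a) + c/\<kappa> * exp (\<kappa> * ((ln t - ln (1-t)) - P))) has_real_derivative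
      (c * exp (\<kappa> * ((ln y - ln (1-y)) - P)) / (y*(1-y)) - real d * real a * y^(a-1) / (1-y^a))) (at y)"
proof -
  have ya: "y^a < 1" using assms by (simp add: power_less_one_iff)
  show ?thesis
    using assms ya by (auto intro!: derivative_eq_intros simp: divide_simps) (simp add: algebra_simps)
qed


lemma cycle_false:
  fixes a d :: nat and x z w :: real
  assumes a1: "a \<ge> 1" and d1: "d \<ge> 1" and zx: "0 < z" "z < x" "x < w" "w < 1"
    and fz: "FF a d z = w" and fw: "FF a d w = z" and fx: "FF a d x = x"
    and cl: "real d * real a * x^a * (1-x) / (1-x^a) < 1"
  shows False
proof -
  define \<Phi> where "\<Phi> t = ln t - ln (1-t)" for t :: real
  define c where "c = real d * real a * x^a * (1-x) / (1-x^a)"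
  define \<kappa> where "\<kappa> = real a * (1-x)/(1-x^a) - x"
  define \<rho> where "\<rho> t = real d * real a * t^a * (1-t) / (1-t^a)" for t :: real
  have x0: "0 < x" "x < 1" using zx by auto
  have ez: "\<Phi> w = real d * ln (1-z^a)" unfolding \<Phi>_def using FF_logodds[OF _ _ fz a1] zx by simp
  have ew: "\<Phi> z = real d * ln (1-w^a)" unfolding \<Phi>_def using FF_logodds[OF _ _ fw a1] zx by simp
  have ex: "\<Phi> x = real d * ln (1-x^a)" unfolding \<Phi>_def using FF_logodds[OF _ _ fx a1] zx by simp
  have xa: "x^a < 1" using x0 a1 by (simp add: power_less_one_iff)
  have c0: "c > 0" unfolding c_def using x0 xa a1 d1 by (simp add: divide_simps)
  have kpos: "\<kappa> > 0"
  proof -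
    have r: "(1 - x)/(1-x^a) = 1 / (\<Sum>i<a. x^i)" using ratio_eq[of x a] x0 a1 by simp
    have "(\<Sum>i<a. x^i) \<le> real a" using S_le[of x a] x0 by simp
    moreover have "(\<Sum>i<a. x^i) \<ge> 1" using S_pos[of x a] x0 a1 by simp
    ultimately have "real a * (1 / (\<Sum>i<a. x^i)) \<ge> 1" by (simp add: divide_simps)
    moreover have "real a * (1-x)/(1-x^a) = real a * (1 / (\<Sum>i<a. x^i))"
      by (simp only: times_divide_eq_right[symmetric] r)
    ultimately have "real a * (1-x)/(1-x^a) \<ge> 1" by simp
    thus ?thesis unfolding \<kappa>_def using x0 by simp
  qed
  define lam where "lam t = real a * ln t + ln (1-t) - ln (1-t^a) - \<kappa> * (ln t - ln (1-t))" for t :: real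
  have lam_le: "lam t \<le> lam x" if t: "0 < t" "t < 1" for t
  proof (cases "t \<le> x")
    case True
    show ?thesis
    proof (rule DERIV_nonneg_imp_nondecreasing[where f=lam, OF True])
      fix y assume y: "t \<le> y" "y \<le> x"
      have "(real a * (1-y)/(1-y^a) - y - \<kappa>) \<ge> 0"
        using h_mono[of y x a] y t x0 a1 unfolding \<kappa>_def by simp
      hence "(real a * (1-y)/(1-y^a) - y - \<kappa>) / (y*(1-y)) \<ge> 0" using y t x0 by simp
      thus "\<exists>D. (lam has_real_derivative D) (at y) \<and> D \<ge> 0"
        using lam_deriv[of y a \<kappa>] y t x0 a1 unfolding lam_def[abs_def] by (intro exI conjI) auto
    qed
  next
    case False
    show ?thesis
    proof (rule DERIV_nonpos_imp_nonincreasing[where f=lam])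
      show "x \<le> t" using False by simp
      fix y assume y: "x \<le> y" "y \<le> t"
      have "(real a * (1-y)/(1-y^a) - y - \<kappa>) \<le> 0"
        using h_mono[of x y a] y t x0 a1 unfolding \<kappa>_def by simp
      hence "(real a * (1-y)/(1-y^a) - y - \<kappa>) / (y*(1-y)) \<le> 0" using y t x0
        by (simp add: divide_nonpos_pos)
      thus "\<exists>D. (lam has_real_derivative D) (at y) \<and> D \<le> 0"
        using lam_deriv[of y a \<kappa>] y t x0 a1 unfolding lam_def[abs_def] by (intro exI conjI) auto
    qed
  qed
  have lnrho: "ln (\<rho> t) = ln (real d * real a) + lam t + \<kappa> * \<Phi> t" if t: "0 < t" "t < 1" for t
  proof -
    have ta: "t^a < 1" using t a1 by (simp add: power_less_one_iff)
    have "ln (\<rho> t) = ln (real d * real a) + ln (t^a) + ln (1-t) - ln (1-t^a)"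
      unfolding \<rho>_def using t ta a1 d1 by (simp add: ln_mult ln_div)
    also have "ln (t^a) = real a * ln t" using t by (simp add: ln_realpow)
    finally show ?thesis unfolding lam_def \<Phi>_def by (simp add: algebra_simps)
  qed
  have key: "\<rho> t \<le> c * exp (\<kappa> * (\<Phi> t - \<Phi> x))" if t: "0 < t" "t < 1" for t
  proof -
    have ta: "t^a < 1" using t a1 by (simp add: power_less_one_iff)
    have rp: "\<rho> t > 0" unfolding \<rho>_def using t ta a1 d1 by simp
    have cx: "c = \<rho> x" unfolding c_def \<rho>_def by simp
    have "ln (\<rho> t) \<le> ln c + \<kappa> * (\<Phi> t - \<Phi> x)"
      using lnrho[OF t] lnrho[OF x0] lam_le[OF t] cx by (simp add: algebra_simps)
    hence "exp (ln (\<rho> t)) \<le> exp (ln c + \<kappa> * (\<Phi> t - \<Phi> x))" by simp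
    thus ?thesis using rp c0 by (simp add: exp_add)
  qed
  define G where "G t = real d * ln (1-t^a) + c/\<kappa> * exp (\<kappa> * ((ln t - ln (1-t)) - \<Phi> x))" for t
  have Gmono: "G s \<le> G t" if st: "0 < s" "s \<le> t" "t < 1" for s t
  proof (rule DERIV_nonneg_imp_nondecreasing[where f=G, OF st(2)])
    fix y assume y: "s \<le> y" "y \<le> t"
    hence y': "0 < y" "y < 1" using st by auto
    have ya: "y^a < 1" using y' a1 by (simp add: power_less_one_iff)
    have ky: "\<rho> y \<le> c * exp (\<kappa> * (\<Phi> y - \<Phi> x))" by (rule key[OF y'])
    have "real d * real a * y^a * (1-y) / (1-y^a) / (y*(1-y)) \<le> c * exp (\<kappa> * (\<Phi> y - \<Phi> x)) / (y*(1-y))"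
      by (rule divide_right_mono[OF ky[unfolded \<rho>_def]]) (use y' in simp)
    moreover have "real d * real a * y^a * (1-y) / (1-y^a) / (y*(1-y)) = real d * real a * y^(a-1) / (1-y^a)"
    proof -
      have aux: "D * q * (1-y) / (1-q) / (y*(1-y)) = D * p / (1-q)"
        if "q = y*p" "1-q \<noteq> 0" "y \<noteq> 0" "1-y \<noteq> 0" for D q p :: real
      proof -
        have "D * q * (1-y) / (1-q) / (y*(1-y)) = (D * p) * (y*(1-y)) / ((y*(1-y)) * (1-q))"
          using that(1) by (simp add: mult.commute mult.left_commute)
        also have "\<dots> = D * p / (1-q)" using that(3,4) by simp
        finally show ?thesis .
      qed
      have "y^a = y * y^(a-1)" using a1 by (cases a) auto
      thus ?thesis using aux[of "y^a" "y^(a-1)" "real d * real a"] y' ya by (simp add: mult.assoc)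
    qed
    ultimately have "c * exp (\<kappa> * ((ln y - ln (1-y)) - \<Phi> x)) / (y*(1-y)) - real d * real a * y^(a-1) / (1-y^a) \<ge> 0"
      unfolding \<Phi>_def by simp
    thus "\<exists>D. (G has_real_derivative D) (at y) \<and> D \<ge> 0"
      using G_deriv[OF y' a1, of \<kappa> d c "\<Phi> x"] kpos unfolding G_def[abs_def] by (intro exI conjI) auto
  qed
  define A where "A = \<Phi> x - \<Phi> z"
  define B where "B = \<Phi> w - \<Phi> x"
  have A0: "A > 0" unfolding A_def \<Phi>_def using zx by (smt (verit) ln_less_cancel_iff)
  have "G x \<le> G w" using Gmono[of x w] zx by simp
  hence "\<Phi> x + c/\<kappa> \<le> \<Phi> z + c/\<kappa> * exp (\<kappa> * B)"
    unfolding G_def B_def using ex ew unfolding \<Phi>_def by simp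
  hence "A \<le> c/\<kappa> * (exp (\<kappa> * B) - 1)" unfolding A_def by (simp add: algebra_simps)
  hence i1: "\<kappa> * A \<le> c * (exp (\<kappa> * B) - 1)" using kpos by (simp add: field_simps)
  have "G z \<le> G x" using Gmono[of z x] zx by simp
  hence "\<Phi> w + c/\<kappa> * exp (- (\<kappa> * A)) \<le> \<Phi> x + c/\<kappa>"
    unfolding G_def A_def using ex ez unfolding \<Phi>_def by (simp add: algebra_simps)
  hence "B \<le> c/\<kappa> * (1 - exp (- (\<kappa> * A)))" unfolding B_def by (simp add: algebra_simps)
  hence i2: "\<kappa> * B \<le> c * (1 - exp (- (\<kappa> * A)))" using kpos by (simp add: field_simps)
  show False
    by (rule final_ineq[of c "\<kappa> * A" "\<kappa> * B"]) (use c0 cl i1 i2 kpos A0 in \<open>auto simp: c_def\<close>)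
qed


lemma FF_pos:
  assumes "0 \<le> t" "t < 1" "a \<ge> 1"
  shows "FF a d t > 0"
proof -
  have "t^a < 1" using assms by (simp add: power_less_one_iff)
  hence "(1-t^a)^d > 0" by simp
  thus ?thesis unfolding FF_def by (smt (verit) divide_pos_pos)
qed

lemma deriv_alg:
  fixes u P p x q D Aa :: real
  assumes "u * P = x / (1 - x)" "u \<noteq> 0" "x \<noteq> 1" "q = x * p"
  shows "D * P * (Aa * p) / (1 + u * P)^2 = D * Aa * q * (1 - x) / u"
proof -
  have "1 + u*P = 1 + x/(1-x)" using assms(1) by simp
  also have "\<dots> = 1/(1-x)" using assms(3) by (simp add: field_simps)
  finally have "1 + u*P = 1/(1-x)" .
  hence "(1 + u*P)^2 = 1/(1-x)^2" by (simp add: power_divide)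
  hence h1: "D * P * (Aa * p) / (1 + u * P)^2 = D * P * (Aa * p) * (1-x)^2" by simp
  have h2: "P = x / ((1-x) * u)"
  proof -
    have "P = (u*P)/u" using assms(2) by simp
    also have "\<dots> = x / ((1-x) * u)" using assms(1) by simp
    finally show ?thesis .
  qed
  show ?thesis unfolding h1 unfolding h2 using assms(2,3,4) by (simp add: field_simps power2_eq_square)
qed

theorem lemma56:
  fixes k \<Delta> :: nat
  assumes "k \<ge> 2" and "\<Delta> \<ge> 2"
  shows "strict_antimono_on {0..1} (lem56_f k \<Delta>)
    \<and> (\<exists>!x. x \<in> {0..1} \<and> lem56_f k \<Delta> x = x)
    \<and> (\<forall>x. x \<in> {0..1} \<and> lem56_f k \<Delta> x = x \<longrightarrow>
          \<bar>deriv (lem56_f k \<Delta>) x\<bar> =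
            real (\<Delta> - 1) * real (k - 1) * x ^ (k - 1) * (1 - x) / (1 - x ^ (k - 1))
        \<and> (\<bar>deriv (lem56_f k \<Delta>) x\<bar> < 1 \<longrightarrow>
            (\<forall>z \<in> {0..1}. lem56_f k \<Delta> (lem56_f k \<Delta> z) = z \<longrightarrow> z = x)))"
proof -
  define a where "a = k - 1"
  define d where "d = \<Delta> - 1"
  have a1: "a \<ge> 1" and d1: "d \<ge> 1" using assms unfolding a_def d_def by auto
  have fe: "lem56_f k \<Delta> = FF a d" unfolding a_def d_def by (rule FF_lem)
  have P1: "strict_antimono_on {0..1} (FF a d)"
    by (rule monotone_onI) (use FF_strict[OF a1 d1] in auto)
  have P2: "\<exists>!x. x \<in> {0..1} \<and> FF a d x = x"
  proof -
    have "\<exists>x. 0 \<le> x \<and> x \<le> 1 \<and> (\<lambda>t. FF a d t - t) x = 0"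
    proof (rule IVT2')
      show "(\<lambda>t. FF a d t - t) 1 \<le> 0" using FF_range[of 1 a d] by simp
      show "0 \<le> (\<lambda>t. FF a d t - t) 0" using FF_range[of 0 a d] by simp
      show "continuous_on {0..1} (\<lambda>t. FF a d t - t)"
        by (intro continuous_intros FF_cont)
    qed simp
    then obtain x where x: "x \<in> {0..1}" "FF a d x = x" by auto
    show ?thesis
    proof (rule ex1I[of _ x])
      show "x \<in> {0..1} \<and> FF a d x = x" using x by simp
      fix y assume y: "y \<in> {0..1} \<and> FF a d y = y"
      show "y = x"
      proof (rule ccontr)
        assume "y \<noteq> x"
        then consider "y < x" | "x < y" by linarith
        thus False
        proof cases
          case 1 thus False using FF_strict[OF a1 d1, of y x] x y by auto
        next
          case 2 thus False using FF_strict[OF a1 d1, of x y] x y by auto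
        qed
      qed
    qed
  qed
  have P3: "\<bar>deriv (FF a d) x\<bar> = real d * real a * x ^ a * (1 - x) / (1 - x ^ a)
        \<and> (\<bar>deriv (FF a d) x\<bar> < 1 \<longrightarrow>
            (\<forall>z \<in> {0..1}. FF a d (FF a d z) = z \<longrightarrow> z = x))"
    if x: "x \<in> {0..1}" "FF a d x = x" for x
  proof -
    have x0: "0 < x" "x < 1" and Y: "(1 - x^a)^d = x / (1 - x)"
      using FF_fix[OF a1, of x d] x by auto
    have xa: "x^a < 1" using x0 a1 by (simp add: power_less_one_iff)
    have dv: "deriv (FF a d) x = - (real d * (1 - x^a)^(d-1) * (real a * x^(a-1))) / (1 + (1-x^a)^d)^2"
      by (rule DERIV_imp_deriv[OF FF_deriv[OF x0 a1]])
    have "\<bar>deriv (FF a d) x\<bar> = real d * (1 - x^a)^(d-1) * (real a * x^(a-1)) / (1 + (1-x^a)^d)^2"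
      unfolding dv using xa x0 by (simp add: abs_divide abs_mult)
    also have "\<dots> = real d * real a * x ^ a * (1 - x) / (1 - x ^ a)"
    proof -
      have e1: "(1-x^a)^d = (1-x^a) * (1-x^a)^(d-1)" using d1 by (cases d) auto
      have e2: "x^a = x * x^(a-1)" using a1 by (cases a) auto
      show ?thesis
        using deriv_alg[of "1-x^a" "(1-x^a)^(d-1)" x "x^a" "x^(a-1)" "real d" "real a"] Y e1 e2 xa x0
        by simp
    qed
    finally have eq: "\<bar>deriv (FF a d) x\<bar> = real d * real a * x ^ a * (1 - x) / (1 - x ^ a)" .
    show ?thesis
    proof (intro conjI impI ballI)
      show "\<bar>deriv (FF a d) x\<bar> = real d * real a * x ^ a * (1 - x) / (1 - x ^ a)" by (rule eq)
      fix z assume lt: "\<bar>deriv (FF a d) x\<bar> < 1" and z: "z \<in> {0..1}" and zz: "FF a d (FF a d z) = z"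
      have cl: "real d * real a * x^a * (1-x) / (1-x^a) < 1" using lt eq by simp
      define w where "w = FF a d z"
      have w01: "0 \<le> w" "w \<le> 1/2" using FF_range[of z a d] z unfolding w_def by auto
      have z12: "z \<le> 1/2" using FF_range[of w a d] w01 zz unfolding w_def by auto
      have w0: "w > 0" unfolding w_def using FF_pos[of z a d] z z12 a1 by auto
      have z0: "z > 0" using FF_pos[of w a d] w01 a1 zz unfolding w_def by auto
      show "z = x"
      proof (rule ccontr)
        assume "z \<noteq> x"
        then consider "z < x" | "x < z" by linarith
        thus False
        proof cases
          case 1
          have "x < w" unfolding w_def using FF_strict[OF a1 d1, of z x] 1 z0 x0 x by simp
          thus False using cycle_false[OF a1 d1 z0 1 _ _ _ _ x(2) cl, of w] w01 zz unfolding w_def by simp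
        next
          case 2
          have "w < x" unfolding w_def using FF_strict[OF a1 d1, of x z] 2 z x0 x by simp
          thus False using cycle_false[OF a1 d1 w0 _ 2 _ _ _ x(2) cl] z12 zz unfolding w_def by simp
        qed
      qed
    qed
  qed
  show ?thesis unfolding fe using P1 P2 P3 unfolding a_def d_def by blast
qed


end
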